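(* Let $(\mathcal{M},\mathrm{dist})$ be a metric space, $\mathcal{F}\subset2^{\mathcal{M}}$, and $J_\beta:\mathcal{M}\to\mathbb{R}\cup\{+\infty\}$, $0<\beta<+\infty$, lower semi-continuous with $J_{\beta_1}\le J_{\beta_2}$ whenever $\beta_1\le\beta_2$; let $J_\infty=\sup_{\beta>0}J_\beta$ and $c_\beta=\inf_{A\in\mathcal{F}}\sup_AJ_\beta\in\mathbb{R}$ for all $0<\beta\le+\infty$. Assume (F1) every $A\in\mathcal{F}$ is closed, and (F2') for every $(A_n)\subset\mathcal{F}$ such that, for some $\beta$, $A_n\subset\mathcal{M}^{c_\infty+1}_\beta$ for all $n$, $\limsup_nA_n\in\mathcal{F}$. For every $0<\beta\le+\infty$ let $\eta_\beta:\mathcal{M}^{c_\infty+1}_\beta\to\mathcal{M}^{c_\infty+1}_\beta$ satisfy $(\eta1)_\beta$: $\eta_\beta(A)\in\mathcal{F}$ whenever $A\in\mathcal{F}$, $A\subset\mathcal{M}^{c_\infty+1}_\beta$; and $(\eta2)_\beta$: $J_\beta(\eta_\beta(x))\le J_\beta(x)$ for all $x\in\mathcal{M}^{c_\infty+1}_\beta$; and suppose $(J_\beta,\eta_\beta)$ satisfies $(PS)_{c_\beta}$. Then, for every $0<\beta\le+\infty$, every optimal set for $J_\beta$ at $c_\beta$ intersects $\mathcal{K}_\beta$; in particular $\mathcal{K}_\beta\neq\emptyset$.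
   Context: $\mathcal{M}^{c'}_\beta=\{x\in\mathcal{M}:J_\beta(x)\le c'\}$. A set $A$ is optimal for $J$ at $c$ if $A\in\mathcal{F}$ and $\sup_AJ=c$. $\limsup_nA_n$ is the set of limits of sequences $x_{n_j}\in A_{n_j}$, $n_j\to\infty$. $\mathcal{K}_\beta=\{x\in\mathcal{M}:J_\beta(x)=J_\beta(\eta_\beta(x))=c_\beta\}$. $(J_\beta,\eta_\beta)$ satisfies $(PS)_{c_\beta}$ if every sequence $(x_n)\subset\mathcal{M}$ with $J_\beta(x_n)\to c_\beta$ and $J_\beta(\eta_\beta(x_n))\to c_\beta$ has a subsequence converging to some $\bar x\in\mathcal{K}_\beta$. *)

theory Defs
  imports "HOL-Analysis.Analysis"
begin

definition lsc :: "('a::metric_space \<Rightarrow> ereal) \<Rightarrow> bool" where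
  "lsc f \<longleftrightarrow> (\<forall>x. f x \<le> Liminf (at x) f)"

text \<open>The family J_beta for 0 < beta <= +infinity, where J_infinity = sup over finite beta.
  The parameter beta is an extended real; only 0 < beta is meaningful.\<close>
definition Jb :: "(real \<Rightarrow> 'a \<Rightarrow> ereal) \<Rightarrow> ereal \<Rightarrow> 'a \<Rightarrow> ereal" where
  "Jb J \<beta> x = (if \<beta> = \<infinity> then (SUP b\<in>{0<..}. J b x) else J (real_of_ereal \<beta>) x)"

definition cval :: "(real \<Rightarrow> 'a \<Rightarrow> ereal) \<Rightarrow> 'a set set \<Rightarrow> ereal \<Rightarrow> ereal" where
  "cval J F \<beta> = (INF A\<in>F. SUP x\<in>A. Jb J \<beta> x)"

definition sublevel :: "(real \<Rightarrow> 'a \<Rightarrow> ereal) \<Rightarrow> ereal \<Rightarrow> ereal \<Rightarrow> 'a set" where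
  "sublevel J \<beta> c' = {x. Jb J \<beta> x \<le> c'}"

text \<open>Kuratowski upper limit: limits of x_{n_j} in A_{n_j}, n_j \<rightarrow> \<infinity>.\<close>
definition limsup_sets :: "(nat \<Rightarrow> 'a::metric_space set) \<Rightarrow> 'a set" where
  "limsup_sets A = {x. \<exists>r xs. strict_mono r \<and> (\<forall>j. xs j \<in> A (r j)) \<and> xs \<longlonglongrightarrow> x}"

definition optimal :: "(real \<Rightarrow> 'a \<Rightarrow> ereal) \<Rightarrow> 'a set set \<Rightarrow> ereal \<Rightarrow> ereal \<Rightarrow> 'a set \<Rightarrow> bool" where
  "optimal J F \<beta> c A \<longleftrightarrow> A \<in> F \<and> (SUP x\<in>A. Jb J \<beta> x) = c"

definition Kset :: "(real \<Rightarrow> 'a \<Rightarrow> ereal) \<Rightarrow> 'a set set \<Rightarrow> (ereal \<Rightarrow> 'a \<Rightarrow> 'a) \<Rightarrow> ereal \<Rightarrow> 'a set" where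
  "Kset J F \<eta> \<beta> = {x. Jb J \<beta> x = cval J F \<beta> \<and> Jb J \<beta> (\<eta> \<beta> x) = cval J F \<beta>}"

text \<open>Palais-Smale condition (PS)_{c_beta} for (J_beta, eta_beta). Sequences are taken in the
  domain of eta_beta, i.e. the sublevel set M^{c_infty+1}_beta.\<close>
definition PS :: "(real \<Rightarrow> 'a::metric_space \<Rightarrow> ereal) \<Rightarrow> 'a set set \<Rightarrow> (ereal \<Rightarrow> 'a \<Rightarrow> 'a) \<Rightarrow> ereal \<Rightarrow> bool" where
  "PS J F \<eta> \<beta> \<longleftrightarrow>
     (\<forall>xs::nat \<Rightarrow> 'a. (\<forall>n. xs n \<in> sublevel J \<beta> (cval J F \<infinity> + 1)) \<and>
        (\<lambda>n. Jb J \<beta> (xs n)) \<longlonglongrightarrow> cval J F \<beta> \<and>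
        (\<lambda>n. Jb J \<beta> (\<eta> \<beta> (xs n))) \<longlonglongrightarrow> cval J F \<beta> \<longrightarrow>
        (\<exists>r xbar. strict_mono r \<and> (xs \<circ> r) \<longlonglongrightarrow> xbar \<and> xbar \<in> Kset J F \<eta> \<beta>))"

end

theory Submission
  imports Defs
begin

lemma core:
  fixes Jf :: "'a \<Rightarrow> ereal" and e :: "'a \<Rightarrow> 'a" and c :: real
  assumes low: "\<And>n. ereal c \<le> (SUP y\<in>e ` A n. Jf y)"
    and up: "\<And>n x. x \<in> A n \<Longrightarrow> Jf (e x) \<le> Jf x \<and> Jf x \<le> ereal (c + 1/(real n+1))"
  shows "\<exists>xs. (\<forall>n. xs n \<in> A n) \<and> (\<lambda>n. Jf (xs n)) \<longlonglongrightarrow> ereal c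
             \<and> (\<lambda>n. Jf (e (xs n))) \<longlonglongrightarrow> ereal c"
proof -
  have "\<forall>n. \<exists>x\<in>A n. ereal (c - 1/(real n+1)) < Jf (e x)"
  proof (rule allI, rule ccontr)
    fix n
    assume "\<not> (\<exists>x\<in>A n. ereal (c - 1/(real n+1)) < Jf (e x))"
    hence "(SUP y\<in>e ` A n. Jf y) \<le> ereal (c - 1/(real n+1))"
      by (auto intro!: SUP_least simp: not_less)
    moreover have "ereal (c - 1/(real n+1)) < ereal c" by simp
    ultimately show False using low[of n] by (meson order_trans not_le)
  qed
  then obtain xs where xs: "\<And>n. xs n \<in> A n"
      "\<And>n. ereal (c - 1/(real n+1)) < Jf (e (xs n))" by metis
  have h: "(\<lambda>n. 1/(real n+1)) \<longlonglongrightarrow> 0"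
    using LIMSEQ_inverse_real_of_nat by (simp add: inverse_eq_divide add.commute)
  have l: "(\<lambda>n. ereal (c - 1/(real n+1))) \<longlonglongrightarrow> ereal c"
    using tendsto_ereal[OF tendsto_diff[OF tendsto_const h, of c]] by simp
  have u: "(\<lambda>n. ereal (c + 1/(real n+1))) \<longlonglongrightarrow> ereal c"
    using tendsto_ereal[OF tendsto_add[OF tendsto_const h, of c]] by simp
  have b1: "\<And>n. ereal (c - 1/(real n+1)) \<le> Jf (e (xs n))" using xs(2) less_imp_le by blast
  have b2: "\<And>n. Jf (e (xs n)) \<le> ereal (c + 1/(real n+1))" using up[OF xs(1)] order_trans by blast
  have b3: "\<And>n. ereal (c - 1/(real n+1)) \<le> Jf (xs n)" using b1 up[OF xs(1)] order_trans by blast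
  have b4: "\<And>n. Jf (xs n) \<le> ereal (c + 1/(real n+1))" using up[OF xs(1)] by blast
  have "(\<lambda>n. Jf (xs n)) \<longlonglongrightarrow> ereal c"
    by (rule tendsto_sandwich[OF _ _ l u]) (use b3 b4 in \<open>auto intro: always_eventually\<close>)
  moreover have "(\<lambda>n. Jf (e (xs n))) \<longlonglongrightarrow> ereal c"
    by (rule tendsto_sandwich[OF _ _ l u]) (use b1 b2 in \<open>auto intro: always_eventually\<close>)
  ultimately show ?thesis using xs(1) by blast
qed

theorem theorem2p8:
  fixes J :: "real \<Rightarrow> 'a::metric_space \<Rightarrow> ereal"
    and F :: "'a set set"
    and \<eta> :: "ereal \<Rightarrow> 'a \<Rightarrow> 'a"
  assumes lsc: "\<And>b. 0 < b \<Longrightarrow> lsc (J b)"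
    and mono: "\<And>b1 b2 x. 0 < b1 \<Longrightarrow> b1 \<le> b2 \<Longrightarrow> J b1 x \<le> J b2 x"
    and c_real: "\<And>\<beta>. 0 < \<beta> \<Longrightarrow> \<bar>cval J F \<beta>\<bar> \<noteq> \<infinity>"
    and F1: "\<And>A. A \<in> F \<Longrightarrow> closed A"
    and F2': "\<And>A \<beta>. (\<forall>n. A n \<in> F) \<Longrightarrow> 0 < \<beta> \<Longrightarrow>
                 (\<forall>n. A n \<subseteq> sublevel J \<beta> (cval J F \<infinity> + 1)) \<Longrightarrow> limsup_sets A \<in> F"
    and eta_maps: "\<And>\<beta> x. 0 < \<beta> \<Longrightarrow> x \<in> sublevel J \<beta> (cval J F \<infinity> + 1) \<Longrightarrow>
                 \<eta> \<beta> x \<in> sublevel J \<beta> (cval J F \<infinity> + 1)"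
    and eta1: "\<And>\<beta> A. 0 < \<beta> \<Longrightarrow> A \<in> F \<Longrightarrow> A \<subseteq> sublevel J \<beta> (cval J F \<infinity> + 1) \<Longrightarrow>
                 \<eta> \<beta> ` A \<in> F"
    and eta2: "\<And>\<beta> x. 0 < \<beta> \<Longrightarrow> x \<in> sublevel J \<beta> (cval J F \<infinity> + 1) \<Longrightarrow>
                 Jb J \<beta> (\<eta> \<beta> x) \<le> Jb J \<beta> x"
    and PS: "\<And>\<beta>. 0 < \<beta> \<Longrightarrow> PS J F \<eta> \<beta>"
  shows "\<forall>\<beta>. 0 < \<beta> \<longrightarrow>
           (\<forall>A. optimal J F \<beta> (cval J F \<beta>) A \<longrightarrow> A \<inter> Kset J F \<eta> \<beta> \<noteq> {}) \<and>
           Kset J F \<eta> \<beta> \<noteq> {}"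
proof (intro allI impI)
  fix \<beta> :: ereal assume bpos: "0 < \<beta>"
  define c where "c = cval J F \<beta>"
  define ci where "ci = cval J F \<infinity>"
  obtain cr where cr: "c = ereal cr" using c_real[OF bpos] unfolding c_def by (cases "cval J F \<beta>") auto
  obtain cir where cir: "ci = ereal cir" using c_real[of \<infinity>] unfolding ci_def by (cases "cval J F \<infinity>") auto
  have Jle: "Jb J \<beta> x \<le> Jb J \<infinity> x" for x
  proof (cases "\<beta> = \<infinity>")
    case False
    then obtain b where b: "\<beta> = ereal b" "0 < b" using bpos by (cases \<beta>) auto
    thus ?thesis unfolding Jb_def using b by (auto intro!: SUP_upper)
  qed simp
  have cle: "c \<le> ci" unfolding c_def ci_def cval_def
    by (intro INF_mono' SUP_mono' Jle)
  hence crle: "cr \<le> cir" using cr cir by simp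
  let ?S = "sublevel J \<beta> (ci + 1)"
  have sub: "A \<subseteq> ?S" if "(SUP x\<in>A. Jb J \<beta> x) \<le> ereal (cr + t)" "t \<le> 1" for A t
  proof
    fix x assume "x \<in> A"
    hence "Jb J \<beta> x \<le> ereal (cr + t)" using that(1) SUP_upper order_trans by metis
    also have "\<dots> \<le> ci + 1" using cir crle that(2) by simp
    finally show "x \<in> ?S" unfolding sublevel_def by simp
  qed
  have lowF: "c \<le> (SUP y\<in>B. Jb J \<beta> y)" if "B \<in> F" for B
    unfolding c_def cval_def using that by (rule INF_lower)
  have PSb: "PS J F \<eta> \<beta>" using PS bpos by blast
  have key: "\<exists>x\<in>A. x \<in> Kset J F \<eta> \<beta>"
    if AF: "\<And>n::nat. A' n \<in> F" and As: "\<And>n. A' n \<subseteq> ?S"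
      and up: "\<And>n x. x \<in> A' n \<Longrightarrow> Jb J \<beta> x \<le> ereal (cr + 1/(real n+1))"
      and inA: "\<And>xs r l. (\<forall>n. xs n \<in> A' n) \<Longrightarrow> strict_mono r \<Longrightarrow> (xs \<circ> r) \<longlonglongrightarrow> l \<Longrightarrow> l \<in> A"
    for A' A
  proof -
    have "\<exists>xs. (\<forall>n. xs n \<in> A' n) \<and> (\<lambda>n. Jb J \<beta> (xs n)) \<longlonglongrightarrow> ereal cr
             \<and> (\<lambda>n. Jb J \<beta> (\<eta> \<beta> (xs n))) \<longlonglongrightarrow> ereal cr"
    proof (rule core)
      fix n
      have "\<eta> \<beta> ` A' n \<in> F" using eta1[OF bpos AF As[unfolded ci_def]] .
      thus "ereal cr \<le> (SUP y\<in>\<eta> \<beta> ` A' n. Jb J \<beta> y)" using lowF cr by simp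
    next
      fix n x assume "x \<in> A' n"
      thus "Jb J \<beta> (\<eta> \<beta> x) \<le> Jb J \<beta> x \<and> Jb J \<beta> x \<le> ereal (cr + 1/(real n+1))"
        using eta2[OF bpos] As up unfolding ci_def by blast
    qed
    then obtain xs where xs: "\<forall>n. xs n \<in> A' n" "(\<lambda>n. Jb J \<beta> (xs n)) \<longlonglongrightarrow> cval J F \<beta>"
      "(\<lambda>n. Jb J \<beta> (\<eta> \<beta> (xs n))) \<longlonglongrightarrow> cval J F \<beta>" using cr c_def by auto
    have "\<forall>n. xs n \<in> sublevel J \<beta> (cval J F \<infinity> + 1)" using xs(1) As unfolding ci_def by blast
    with PSb xs obtain r xbar where "strict_mono r" "(xs \<circ> r) \<longlonglongrightarrow> xbar" "xbar \<in> Kset J F \<eta> \<beta>"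
      unfolding PS_def by blast
    thus ?thesis using inA[OF xs(1)] by blast
  qed
  have part1: "A \<inter> Kset J F \<eta> \<beta> \<noteq> {}" if opt: "optimal J F \<beta> (cval J F \<beta>) A" for A
  proof -
    have AF: "A \<in> F" and sA: "(SUP x\<in>A. Jb J \<beta> x) = ereal cr" using opt cr c_def unfolding optimal_def by auto
    have up: "Jb J \<beta> x \<le> ereal (cr + 1/(real n+1))" if "x \<in> A" for x and n :: nat
    proof -
      have "Jb J \<beta> x \<le> ereal cr" using sA SUP_upper that by metis
      also have "\<dots> \<le> ereal (cr + 1/(real n+1))" by simp
      finally show ?thesis .
    qed
    have "\<exists>x\<in>A. x \<in> Kset J F \<eta> \<beta>"
    proof (rule key[where A'="\<lambda>_. A"])
      show "A \<subseteq> ?S" for n :: nat using sub[of A 0] sA by simp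
    next
      fix xs r l assume "\<forall>n::nat. xs n \<in> A" "strict_mono (r::nat\<Rightarrow>nat)" "(xs \<circ> r) \<longlonglongrightarrow> l"
      thus "l \<in> A" using F1[OF AF] closed_sequentially[of A "xs \<circ> r" l] by auto
    qed (use AF up in auto)
    thus ?thesis by blast
  qed
  have "\<forall>n::nat. \<exists>B\<in>F. (SUP x\<in>B. Jb J \<beta> x) < ereal (cr + 1/(real n+1))"
  proof
    fix n :: nat
    have "cval J F \<beta> < ereal (cr + 1/(real n+1))" using cr c_def by simp
    thus "\<exists>B\<in>F. (SUP x\<in>B. Jb J \<beta> x) < ereal (cr + 1/(real n+1))"
      unfolding cval_def by (simp add: INF_less_iff)
  qed
  then obtain A' where A': "\<And>n. A' n \<in> F" "\<And>n. (SUP x\<in>A' n. Jb J \<beta> x) < ereal (cr + 1/(real n+1))"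
    by metis
  have "\<exists>x\<in>UNIV. x \<in> Kset J F \<eta> \<beta>"
  proof (rule key[where A'=A'])
    fix n
    have "1/(real n+1) \<le> 1" by (simp add: field_simps)
    thus "A' n \<subseteq> ?S" using sub[of "A' n" "1/(real n+1)"] A'(2)[of n] by simp
  next
    fix n x assume "x \<in> A' n"
    thus "Jb J \<beta> x \<le> ereal (cr + 1/(real n+1))" using A'(2)[of n] SUP_upper order_trans less_imp_le by metis
  qed (use A' in auto)
  thus "(\<forall>A. optimal J F \<beta> (cval J F \<beta>) A \<longrightarrow> A \<inter> Kset J F \<eta> \<beta> \<noteq> {}) \<and>
           Kset J F \<eta> \<beta> \<noteq> {}" using part1 by blast
qed

end
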